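(* In the setting described in the context, the graph $K$ has no parallel edges: no pair $\{q,q'\}$ of representatives is added to $F$ on account of two distinct source edges of $E_i$.
   Context: Let $G=(V,E)$ be a connected undirected graph on $n$ vertices with positive integer edge weights $w$ and a unique minimum spanning tree $Z$. Fix an integer $k\ge 2$, $\varepsilon>0$, $t=(2k-1)(1+\varepsilon)$, and let $H$ be the greedy spanner: starting from $H=(V,\emptyset)$, the edges of $E$ are processed in non-decreasing order of weight and $\{u,v\}$ is added to $H$ iff currently $d_H(u,v)>t\cdot w(u,v)$. Order the vertices $v_1,\dots,v_n$ by a preorder traversal of $Z$ and let $L=\sum_{j=2}^n d_Z(v_{j-1},v_j)$. Fix $i\in\{1,\dots,\lceil\log_k n\rceil\}$, set $a=k^{i-1}L/n$, and let $E_i=\{e\in E(H)\setminus E(Z): a<w(e)\le ka\}$. View $Z$ as a metric tree (each edge of weight $x$ is a segment of length $x$) and let $d_Z$ denote distance in it. Let $P=(p_0,\dots,p_L)$ be a path with unit-length edges, where $v_1=p_0$ and $v_j=p_{\ell_j}$ with $\ell_1=0$, $\ell_j=\ell_{j-1}+d_Z(v_{j-1},v_j)$; each point $p_h$ with $\ell_{j-1}\le h\le \ell_j$ is identified with the point of $Z$ on the $Z$-path from $v_{j-1}$ to $v_j$ at distance $h-\ell_{j-1}$ from $v_{j-1}$ (Steiner points subdividing edges of $Z\subseteq H$). Set $s=8L/(\varepsilon a)$, assumed (by scaling) to be such that $s$ and $L/s=\varepsilon a/8$ are integers. For $j\in[s]$ the interval $I_j$ is $\{p_{(j-1)L/s},\dots,p_{jL/s}\}$,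 and $r_j$ is an arbitrarily chosen interior point of $I_j$; $R=\{r_1,\dots,r_s\}$. For an integer $b\ge 0$, $N_b(j)=\{r_h: h\in[s], |j-h|\le b\}$. The multigraph $K=(R,F)$ is defined as follows: for each $e=\{u,v\}\in E_i$ with $u\in I_h$, $v\in I_j$, let $b=\lfloor w(e)/a\rfloor$ and let $M$ be an arbitrary maximal matching between $N_b(h)$ and $N_b(j)$; all edges of $M$ are added to $F$, and for each $\{q,q'\}\in M$ with $q\in N_b(h)$, $q'\in N_b(j)$, the edge $\{u,v\}$ is called its source, written $S(q,q')=(u,v)$. *)

theory Defs
  imports Complex_Main "HOL-Library.Extended_Real"
begin

definition simple_graph :: "'v set \<Rightarrow> 'v set set \<Rightarrow> bool" where
  "simple_graph V E \<longleftrightarrow> (\<forall>e\<in>E. \<exists>u v. u \<in> V \<and> v \<in> V \<and> u \<noteq> v \<and> e = {u, v})"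

definition walk :: "'v set set \<Rightarrow> 'v list \<Rightarrow> bool" where
  "walk F xs \<longleftrightarrow> xs \<noteq> [] \<and> (\<forall>j. Suc j < length xs \<longrightarrow> {xs ! j, xs ! Suc j} \<in> F)"

definition walk_weight :: "('v set \<Rightarrow> nat) \<Rightarrow> 'v list \<Rightarrow> nat" where
  "walk_weight w xs = (\<Sum>j<length xs - 1. w {xs ! j, xs ! Suc j})"

definition connected_on :: "'v set \<Rightarrow> 'v set set \<Rightarrow> bool" where
  "connected_on V F \<longleftrightarrow> (\<forall>u\<in>V. \<forall>v\<in>V. \<exists>xs. walk F xs \<and> hd xs = u \<and> last xs = v)"

text \<open>Shortest-path distance in (V,F) w.r.t. weights w (infinity if unreachable).\<close>
definition gdist :: "('v set \<Rightarrow> nat) \<Rightarrow> 'v set set \<Rightarrow> 'v \<Rightarrow> 'v \<Rightarrow> ereal" where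
  "gdist w F u v = Inf {ereal (real (walk_weight w xs)) | xs. walk F xs \<and> hd xs = u \<and> last xs = v}"

definition spanning_tree :: "'v set \<Rightarrow> 'v set set \<Rightarrow> 'v set set \<Rightarrow> bool" where
  "spanning_tree V E T \<longleftrightarrow> T \<subseteq> E \<and> connected_on V T \<and> (\<forall>e\<in>T. \<not> connected_on V (T - {e}))"

definition MST :: "'v set \<Rightarrow> 'v set set \<Rightarrow> ('v set \<Rightarrow> nat) \<Rightarrow> 'v set set \<Rightarrow> bool" where
  "MST V E w T \<longleftrightarrow> spanning_tree V E T \<and>
     (\<forall>T'. spanning_tree V E T' \<longrightarrow> sum w T \<le> sum w T')"

definition unique_MST :: "'v set \<Rightarrow> 'v set set \<Rightarrow> ('v set \<Rightarrow> nat) \<Rightarrow> 'v set set \<Rightarrow> bool" where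
  "unique_MST V E w Z \<longleftrightarrow> MST V E w Z \<and> (\<forall>T. MST V E w T \<longrightarrow> T = Z)"

definition greedy_step :: "('v set \<Rightarrow> nat) \<Rightarrow> real \<Rightarrow> 'v set set \<Rightarrow> 'v set \<Rightarrow> 'v set set" where
  "greedy_step w t H e =
     (if \<exists>u v. e = {u, v} \<and> gdist w H u v > ereal (t * real (w e)) then insert e H else H)"

text \<open>Edges processed in the order of the list es (assumed sorted by non-decreasing weight).\<close>
definition greedy_spanner :: "('v set \<Rightarrow> nat) \<Rightarrow> real \<Rightarrow> 'v set list \<Rightarrow> 'v set set" where
  "greedy_spanner w t es = foldl (greedy_step w t) {} es"

definition on_tree_path :: "'v set set \<Rightarrow> 'v \<Rightarrow> 'v \<Rightarrow> 'v \<Rightarrow> bool" where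
  "on_tree_path Z r x p \<longleftrightarrow>
     (\<exists>xs. walk Z xs \<and> distinct xs \<and> hd xs = r \<and> last xs = x \<and> p \<in> set xs)"

text \<open>vs is a preorder (DFS) traversal of tree Z rooted at hd vs: every vertex, when visited,
  has its parent (its Z-neighbour on the root path) on the current root path, i.e. on the
  path from the root to the previously visited vertex.\<close>
definition is_preorder :: "'v set \<Rightarrow> 'v set set \<Rightarrow> 'v list \<Rightarrow> bool" where
  "is_preorder V Z vs \<longleftrightarrow> vs \<noteq> [] \<and> distinct vs \<and> set vs = V \<and>
     (\<forall>j. 0 < j \<and> j < length vs \<longrightarrow>
        (\<exists>p. {p, vs ! j} \<in> Z \<and> on_tree_path Z (hd vs) (vs ! j) p
              \<and> on_tree_path Z (hd vs) (vs ! (j - 1)) p))"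

text \<open>Position ell_m of vertex vs!m on P (0-indexed list, so ell 0 = 0).\<close>
definition ell :: "('v set \<Rightarrow> nat) \<Rightarrow> 'v set set \<Rightarrow> 'v list \<Rightarrow> nat \<Rightarrow> real" where
  "ell w Z vs m = (\<Sum>j\<in>{1..m}. real_of_ereal (gdist w Z (vs ! (j - 1)) (vs ! j)))"

definition tour_length :: "('v set \<Rightarrow> nat) \<Rightarrow> 'v set set \<Rightarrow> 'v list \<Rightarrow> real" where
  "tour_length w Z vs = ell w Z vs (length vs - 1)"

text \<open>Vertex u lies in interval I_h = {p_((h-1)L/s), ..., p_(hL/s)}.\<close>
definition vertex_in_interval ::
  "('v set \<Rightarrow> nat) \<Rightarrow> 'v set set \<Rightarrow> 'v list \<Rightarrow> nat \<Rightarrow> 'v \<Rightarrow> nat \<Rightarrow> bool" where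
  "vertex_in_interval w Z vs s u h \<longleftrightarrow>
     (\<exists>m<length vs. vs ! m = u \<and>
        real (h - 1) * tour_length w Z vs / real s \<le> ell w Z vs m \<and>
        ell w Z vs m \<le> real h * tour_length w Z vs / real s)"

text \<open>Points of P are identified with their index in {0..L}; r j is the index of r_j.
  N_b(j) = {r_h : h in [s], |j-h| <= b}.\<close>
definition Nb :: "nat \<Rightarrow> (nat \<Rightarrow> nat) \<Rightarrow> nat \<Rightarrow> nat \<Rightarrow> nat set" where
  "Nb s r b j = {r h | h. 1 \<le> h \<and> h \<le> s \<and> \<bar>int j - int h\<bar> \<le> int b}"

definition maximal_matching_between :: "'a set \<Rightarrow> 'a set \<Rightarrow> 'a set set \<Rightarrow> bool" where
  "maximal_matching_between A B M \<longleftrightarrow>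
     M \<subseteq> {{q, q'} | q q'. q \<in> A \<and> q' \<in> B \<and> q \<noteq> q'} \<and>
     (\<forall>f\<in>M. \<forall>g\<in>M. f \<noteq> g \<longrightarrow> f \<inter> g = {}) \<and>
     (\<forall>q\<in>A. \<forall>q'\<in>B. q \<noteq> q' \<longrightarrow> (\<exists>f\<in>M. q \<in> f \<or> q' \<in> f))"

end

theory Submission
  imports Defs
begin


definition reach :: "'v set set \<Rightarrow> 'v \<Rightarrow> 'v \<Rightarrow> bool" where
  "reach F x y \<longleftrightarrow> (\<exists>xs. walk F xs \<and> hd xs = x \<and> last xs = y)"

lemma walk_single[simp]: "walk F [x]"
  by (simp add: walk_def)

lemma walk_Nil[simp]: "\<not> walk F []"
  by (simp add: walk_def)

lemma walk_Cons2[simp]: "walk F (x # y # zs) \<longleftrightarrow> {x, y} \<in> F \<and> walk F (y # zs)"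
proof
  assume "walk F (x # y # zs)"
  then have A: "\<forall>j. Suc j < Suc (Suc (length zs)) \<longrightarrow> {(x#y#zs) ! j, (x#y#zs) ! Suc j} \<in> F"
    by (simp add: walk_def)
  have "{x,y} \<in> F" using A[rule_format, of 0] by simp
  moreover have "walk F (y # zs)" unfolding walk_def
  proof (intro conjI allI impI)
    fix j assume "Suc j < length (y # zs)"
    then show "{(y # zs) ! j, (y # zs) ! Suc j} \<in> F" using A[rule_format, of "Suc j"] by simp
  qed simp
  ultimately show "{x, y} \<in> F \<and> walk F (y # zs)" by simp
next
  assume B: "{x, y} \<in> F \<and> walk F (y # zs)"
  show "walk F (x # y # zs)" unfolding walk_def
  proof (intro conjI allI impI)
    fix j assume j: "Suc j < length (x # y # zs)"
    show "{(x # y # zs) ! j, (x # y # zs) ! Suc j} \<in> F"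
    proof (cases j)
      case 0 then show ?thesis using B by simp
    next
      case (Suc j') then show ?thesis using B j unfolding walk_def by auto
    qed
  qed simp
qed

lemma walk_weight_single[simp]: "walk_weight w [x] = 0"
  by (simp add: walk_weight_def)

lemma walk_weight_Cons2[simp]: "walk_weight w (x # y # zs) = w {x, y} + walk_weight w (y # zs)"
proof -
  have "length (x # y # zs) - 1 = Suc (length (y # zs) - 1)" by simp
  then show ?thesis unfolding walk_weight_def
    by (simp only: sum.lessThan_Suc_shift) simp
qed

lemma walk_Cons: "xs \<noteq> [] \<Longrightarrow> walk F (x # xs) \<longleftrightarrow> {x, hd xs} \<in> F \<and> walk F xs"
  by (cases xs) auto

lemma walk_weight_Cons: "xs \<noteq> [] \<Longrightarrow> walk_weight w (x # xs) = w {x, hd xs} + walk_weight w xs"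
  by (cases xs) auto

lemma walk_append_weight:
  assumes "xs \<noteq> []" "ys \<noteq> []" "last xs = hd ys"
  shows "walk_weight w (xs @ tl ys) = walk_weight w xs + walk_weight w ys"
  using assms
proof (induction xs rule: list_nonempty_induct)
  case (single x)
  then show ?case by (cases ys) auto
next
  case (cons x xs)
  then show ?case by (simp add: walk_weight_Cons)
qed

lemma walk_append:
  assumes "walk F xs" "walk F ys" "last xs = hd ys"
  shows "walk F (xs @ tl ys)"
proof -
  have "xs \<noteq> []" "ys \<noteq> []" using assms by auto
  then show ?thesis using assms
  proof (induction xs rule: list_nonempty_induct)
    case (single x)
    then show ?case by (cases ys) auto
  next
    case (cons x xs)
    then show ?case by (simp add: walk_Cons)
  qed
qed

lemma hd_append_tl: "xs \<noteq> [] \<Longrightarrow> hd (xs @ tl ys) = hd xs" by simp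

lemma last_append_tl: "xs \<noteq> [] \<Longrightarrow> ys \<noteq> [] \<Longrightarrow> last xs = hd ys \<Longrightarrow> last (xs @ tl ys) = last ys"
  by (cases ys) auto

lemma length_append_tl: "ys \<noteq> [] \<Longrightarrow> length (xs @ tl ys) = length xs + length ys - 1"
  by (cases ys) auto

lemma walk_rev:
  assumes "walk F xs"
  shows "walk F (rev xs) \<and> walk_weight w (rev xs) = walk_weight w xs"
proof -
  have "xs \<noteq> []" using assms by auto
  then show ?thesis using assms
  proof (induction xs rule: list_nonempty_induct)
    case (single x)
    then show ?case by simp
  next
    case (cons x xs)
    have w: "walk F xs" "{x, hd xs} \<in> F" using walk_Cons[OF cons.hyps] cons.prems by auto
    have r: "rev (x # xs) = rev xs @ tl [hd xs, x]" using cons by (cases xs) auto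
    have l: "last (rev xs) = hd [hd xs, x]" using cons by (simp add: last_rev)
    have wx: "walk F [hd xs, x]" using w by (simp add: insert_commute)
    show ?case unfolding r
      using walk_append[OF conjunct1[OF cons.IH[OF w(1)]] wx l]
            walk_append_weight[of "rev xs" "[hd xs, x]" w] cons
      by (simp add: walk_weight_Cons insert_commute last_rev cons.IH[OF w(1)])
  qed
qed

lemma walk_take:
  assumes "walk F xs" "j < length xs"
  shows "walk F (take (Suc j) xs)"
  using assms unfolding walk_def by auto

lemma walk_drop:
  assumes "walk F xs" "j < length xs"
  shows "walk F (drop j xs)"
  using assms unfolding walk_def by (auto simp: add.commute[of j])

lemma walk_weight_take_drop:
  assumes "j < length xs"
  shows "walk_weight w (take (Suc j) xs) + walk_weight w (drop j xs) = walk_weight w xs"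
proof -
  have d: "drop j xs = xs ! j # drop (Suc j) xs" using assms by (simp add: Cons_nth_drop_Suc)
  have e: "take (Suc j) xs @ tl (drop j xs) = xs" using d by (metis append_take_drop_id list.sel(3))
  have l: "last (take (Suc j) xs) = hd (drop j xs)" using assms d
    by (simp add: take_Suc_conv_app_nth)
  have n: "take (Suc j) xs \<noteq> []" "drop j xs \<noteq> []" using assms by (cases xs, auto)+
  have "walk_weight w (take (Suc j) xs @ tl (drop j xs)) = walk_weight w (take (Suc j) xs) + walk_weight w (drop j xs)"
    using walk_append_weight[OF n l] .
  then show ?thesis by (simp only: e)
qed

lemma walk_restrict:
  assumes "walk F xs" "\<forall>i. Suc i < length xs \<longrightarrow> {xs ! i, xs ! Suc i} \<in> G"
  shows "walk G xs"
  using assms unfolding walk_def by auto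

lemma walk_mono: "walk F xs \<Longrightarrow> F \<subseteq> G \<Longrightarrow> walk G xs"
  unfolding walk_def by auto

lemma walk_edge: "walk F xs \<Longrightarrow> Suc i < length xs \<Longrightarrow> {xs ! i, xs ! Suc i} \<in> F"
  unfolding walk_def by auto

lemma reach_refl[simp]: "reach F x x"
  unfolding reach_def by (rule exI[of _ "[x]"]) simp

lemma reach_sym: "reach F x y \<Longrightarrow> reach F y x"
proof -
  assume "reach F x y"
  then obtain xs where xs: "walk F xs" "hd xs = x" "last xs = y" unfolding reach_def by blast
  have "walk F (rev xs)" using walk_rev[OF xs(1)] by simp
  moreover have "hd (rev xs) = y" "last (rev xs) = x" using xs by (auto simp: hd_rev last_rev)
  ultimately show ?thesis unfolding reach_def by blast
qed

lemma reach_trans: "reach F x y \<Longrightarrow> reach F y z \<Longrightarrow> reach F x z"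
proof -
  assume "reach F x y" "reach F y z"
  then obtain xs ys where xs: "walk F xs" "hd xs = x" "last xs = y" and ys: "walk F ys" "hd ys = y" "last ys = z"
    unfolding reach_def by blast
  have ne: "xs \<noteq> []" "ys \<noteq> []" using xs ys by auto
  have "walk F (xs @ tl ys)" using walk_append[OF xs(1) ys(1)] xs(3) ys(2) by simp
  moreover have "hd (xs @ tl ys) = x" using ne xs by simp
  moreover have "last (xs @ tl ys) = z" using last_append_tl[OF ne] xs ys by simp
  ultimately show ?thesis unfolding reach_def by blast
qed

lemma reach_mono: "reach F x y \<Longrightarrow> F \<subseteq> G \<Longrightarrow> reach G x y"
  unfolding reach_def using walk_mono by blast

lemma reach_edge: "{x, y} \<in> F \<Longrightarrow> reach F x y"
  unfolding reach_def by (rule exI[of _ "[x,y]"]) simp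

lemma gdist_le:
  assumes "walk F xs" "hd xs = u" "last xs = v"
  shows "gdist w F u v \<le> ereal (real (walk_weight w xs))"
  unfolding gdist_def using assms by (intro Inf_lower) blast

lemma gdist_attained:
  assumes "reach F u v"
  shows "\<exists>xs. walk F xs \<and> hd xs = u \<and> last xs = v \<and> gdist w F u v = ereal (real (walk_weight w xs))"
proof -
  define P where "P n \<longleftrightarrow> (\<exists>xs. walk F xs \<and> hd xs = u \<and> last xs = v \<and> walk_weight w xs = n)" for n
  have "\<exists>n. P n" using assms unfolding reach_def P_def by blast
  then obtain n where Pn: "P n" and mn: "\<And>m. P m \<Longrightarrow> n \<le> m" by (metis LeastI Least_le)
  from Pn obtain xs where xs: "walk F xs" "hd xs = u" "last xs = v" "walk_weight w xs = n"
    unfolding P_def by blast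
  have "gdist w F u v = ereal (real n)"
    unfolding gdist_def
  proof (rule antisym)
    show "Inf {ereal (real (walk_weight w xs)) |xs. walk F xs \<and> hd xs = u \<and> last xs = v} \<le> ereal (real n)"
      using xs by (intro Inf_lower) auto
    show "ereal (real n) \<le> Inf {ereal (real (walk_weight w xs)) |xs. walk F xs \<and> hd xs = u \<and> last xs = v}"
    proof (rule Inf_greatest)
      fix y assume "y \<in> {ereal (real (walk_weight w xs)) |xs. walk F xs \<and> hd xs = u \<and> last xs = v}"
      then obtain ys where ys: "y = ereal (real (walk_weight w ys))" "walk F ys" "hd ys = u" "last ys = v" by blast
      then have "P (walk_weight w ys)" unfolding P_def by blast
      then have "n \<le> walk_weight w ys" by (rule mn)
      then show "ereal (real n) \<le> y" using ys(1) by simp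
    qed
  qed
  then have "gdist w F u v = ereal (real (walk_weight w xs))" using xs(4) by simp
  then show ?thesis using xs(1-3) by blast
qed

lemma gdist_none:
  assumes "\<not> reach F u v"
  shows "gdist w F u v = \<infinity>"
proof -
  have E: "{ereal (real (walk_weight w xs)) |xs. walk F xs \<and> hd xs = u \<and> last xs = v} = {}"
    using assms unfolding reach_def by auto
  show ?thesis unfolding gdist_def E by (simp add: top_ereal_def)
qed

lemma gdist_sym_le: "gdist w F v u \<le> gdist w F u v"
proof (cases "reach F u v")
  case True
  then obtain xs where xs: "walk F xs" "hd xs = u" "last xs = v" "gdist w F u v = ereal (real (walk_weight w xs))"
    using gdist_attained[OF True, of w] by blast
  have r: "walk F (rev xs)" "walk_weight w (rev xs) = walk_weight w xs" using walk_rev[OF xs(1)] by auto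
  have "hd (rev xs) = v" "last (rev xs) = u" using xs(2,3) by (auto simp: hd_rev last_rev)
  then have "gdist w F v u \<le> ereal (real (walk_weight w (rev xs)))" by (intro gdist_le[OF r(1)])
  then show ?thesis using xs(4) r(2) by simp
next
  case False then show ?thesis by (simp add: gdist_none)
qed

lemma gdist_sym: "gdist w F u v = gdist w F v u"
  by (rule antisym) (rule gdist_sym_le)+




lemma walk_snoc:
  assumes "xs \<noteq> []"
  shows "walk F (xs @ [z]) \<longleftrightarrow> walk F xs \<and> {last xs, z} \<in> F"
proof
  assume A: "walk F (xs @ [z])"
  have "walk F (take (Suc (length xs - 1)) (xs @ [z]))"
    using walk_take[OF A, of "length xs - 1"] assms by simp
  then have "walk F xs" using assms by simp
  moreover have "{(xs @ [z]) ! (length xs - 1), (xs @ [z]) ! Suc (length xs - 1)} \<in> F"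
    using walk_edge[OF A, of "length xs - 1"] assms by simp
  then have "{last xs, z} \<in> F" using assms by (simp add: nth_append last_conv_nth)
  ultimately show "walk F xs \<and> {last xs, z} \<in> F" by simp
next
  assume B: "walk F xs \<and> {last xs, z} \<in> F"
  then have "walk F (xs @ tl [last xs, z])" by (intro walk_append) auto
  then show "walk F (xs @ [z])" by simp
qed

lemma cut_walk:
  assumes "walk F xs" "hd xs \<in> {p, q}" "f = {p, q}"
  shows "reach (F - {f}) p (last xs) \<or> reach (F - {f}) q (last xs)"
  using assms
proof (induction xs rule: rev_induct)
  case Nil then show ?case by simp
next
  case (snoc z xs)
  show ?case
  proof (cases "xs = []")
    case True then show ?thesis using snoc by auto
  next
    case False
    have w: "walk F xs" "{last xs, z} \<in> F" using snoc.prems walk_snoc[OF False] by auto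
    have "reach (F - {f}) p (last xs) \<or> reach (F - {f}) q (last xs)"
      using snoc.IH[OF w(1)] snoc.prems False by simp
    show ?thesis
    proof (cases "{last xs, z} = f")
      case True
      then have "z \<in> {p,q}" using snoc.prems by auto
      then show ?thesis by auto
    next
      case False
      then have "reach (F - {f}) (last xs) z" using w by (intro reach_edge) auto
      then show ?thesis using \<open>reach (F - {f}) p (last xs) \<or> reach (F - {f}) q (last xs)\<close>
        by (auto intro: reach_trans)
    qed
  qed
qed

lemma crossing_index:
  assumes "walk F W" "hd W \<in> C" "last W \<notin> C"
  shows "\<exists>j. Suc j < length W \<and> W ! j \<in> C \<and> W ! Suc j \<notin> C \<and> (\<forall>i. j < i \<longrightarrow> i < length W \<longrightarrow> W ! i \<notin> C)"
proof -
  have ne: "W \<noteq> []" using assms by auto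
  define S where "S = {i. i < length W \<and> W ! i \<in> C}"
  have fS: "finite S" unfolding S_def by simp
  have 0: "0 \<in> S" unfolding S_def using ne assms by (simp add: hd_conv_nth)
  define j where "j = Max S"
  have jS: "j \<in> S" unfolding j_def using fS 0 by (intro Max_in) auto
  have jmax: "\<And>i. i \<in> S \<Longrightarrow> i \<le> j" unfolding j_def using fS by simp
  have "j \<noteq> length W - 1" using jS assms ne unfolding S_def by (auto simp: last_conv_nth)
  moreover have "j < length W" using jS unfolding S_def by simp
  ultimately have sj: "Suc j < length W" by linarith
  have "\<forall>i. j < i \<longrightarrow> i < length W \<longrightarrow> W ! i \<notin> C"
    using jmax unfolding S_def by force
  then show ?thesis using sj jS unfolding S_def by auto
qed

lemma conn_from:
  assumes "\<And>z. z \<in> V \<Longrightarrow> reach F p z"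
  shows "connected_on V F"
  unfolding connected_on_def
proof (intro ballI)
  fix u v assume "u \<in> V" "v \<in> V"
  then have "reach F u v" using reach_trans[OF reach_sym[OF assms] assms] by simp
  then show "\<exists>xs. walk F xs \<and> hd xs = u \<and> last xs = v" unfolding reach_def .
qed

locale mst_setting =
  fixes V :: "'v set" and E :: "'v set set" and w :: "'v set \<Rightarrow> nat" and Z :: "'v set set"
  assumes fin: "finite V" and simple: "simple_graph V E" and mst: "unique_MST V E w Z"
begin

lemma Z_st: "spanning_tree V E Z" using mst unfolding unique_MST_def MST_def by simp
lemma Z_sub: "Z \<subseteq> E" using Z_st unfolding spanning_tree_def by simp
lemma Z_conn: "connected_on V Z" using Z_st unfolding spanning_tree_def by simp
lemma Z_min: "f \<in> Z \<Longrightarrow> \<not> connected_on V (Z - {f})" using Z_st unfolding spanning_tree_def by simp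

lemma edge_form: "e \<in> E \<Longrightarrow> \<exists>u v. u \<in> V \<and> v \<in> V \<and> u \<noteq> v \<and> e = {u, v}"
  using simple unfolding simple_graph_def by blast

lemma E_fin: "finite E"
proof -
  have "E \<subseteq> Pow V"
  proof
    fix e assume "e \<in> E"
    then obtain u v where "u \<in> V" "v \<in> V" "e = {u, v}" using edge_form by blast
    then show "e \<in> Pow V" by simp
  qed
  moreover have "finite (Pow V)" using fin by simp
  ultimately show ?thesis by (rule finite_subset)
qed

lemma Z_reach: "u \<in> V \<Longrightarrow> v \<in> V \<Longrightarrow> reach Z u v"
  using Z_conn unfolding connected_on_def reach_def by blast

lemma cut:
  assumes "f \<in> Z" "f = {p, q}" "p \<in> V" "z \<in> V"
  shows "reach (Z - {f}) p z \<or> reach (Z - {f}) q z"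
proof -
  obtain xs where "walk Z xs" "hd xs = p" "last xs = z" using Z_reach[OF assms(3,4)] unfolding reach_def by blast
  then show ?thesis using cut_walk[of Z xs p q f] assms by auto
qed

lemma tree_sep:
  assumes "f \<in> Z" "f = {p, q}" "p \<in> V"
  shows "\<not> reach (Z - {f}) p q"
proof
  assume pq: "reach (Z - {f}) p q"
  have "\<And>z. z \<in> V \<Longrightarrow> reach (Z - {f}) p z"
  proof -
    fix z assume z: "z \<in> V"
    show "reach (Z - {f}) p z"
    proof (cases "reach (Z - {f}) p z")
      case False
      then have "reach (Z - {f}) q z" using cut[OF assms z] by simp
      then show ?thesis using reach_trans[OF pq] by simp
    qed simp
  qed
  then have "connected_on V (Z - {f})" by (rule conn_from)
  then show False using Z_min[OF assms(1)] by simp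
qed

lemma tree_sep': "f \<in> Z \<Longrightarrow> a \<in> f \<Longrightarrow> b \<in> f \<Longrightarrow> a \<noteq> b \<Longrightarrow> \<not> reach (Z - {f}) a b"
proof -
  assume A: "f \<in> Z" "a \<in> f" "b \<in> f" "a \<noteq> b"
  obtain u v where uv: "u \<in> V" "v \<in> V" "u \<noteq> v" "f = {u, v}" using edge_form A(1) Z_sub by blast
  have "f = {a, b}" "a \<in> V" using A uv by auto
  then show ?thesis using tree_sep[OF A(1)] by simp
qed

lemma span_inside:
  assumes "F \<subseteq> E" "connected_on V F"
  shows "\<exists>T \<subseteq> F. spanning_tree V E T"
proof -
  have fF: "finite F" using assms(1) E_fin finite_subset by blast
  define P where "P n \<longleftrightarrow> (\<exists>T. T \<subseteq> F \<and> connected_on V T \<and> card T = n)" for n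
  have "P (card F)" using assms unfolding P_def by blast
  then obtain n where Pn: "P n" and mn: "\<And>m. P m \<Longrightarrow> n \<le> m" by (metis LeastI Least_le)
  then obtain T where T: "T \<subseteq> F" "connected_on V T" "card T = n" unfolding P_def by blast
  have fT: "finite T" using T(1) fF finite_subset by blast
  have "\<forall>e\<in>T. \<not> connected_on V (T - {e})"
  proof (intro ballI notI)
    fix e assume e: "e \<in> T" "connected_on V (T - {e})"
    then have "P (card (T - {e}))" unfolding P_def using T(1) by blast
    then have "n \<le> card (T - {e})" by (rule mn)
    moreover have "card (T - {e}) < card T" by (rule card_Diff1_less[OF fT e(1)])
    ultimately show False using T(3) by simp
  qed
  then show ?thesis using T assms(1) unfolding spanning_tree_def by blast
qed

lemma exchange:
  assumes f: "f \<in> Z" and g: "g \<in> E" "g \<notin> Z" and c: "connected_on V (insert g (Z - {f}))"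
  shows "w f < w g"
proof (rule ccontr)
  assume "\<not> w f < w g"
  then have le: "w g \<le> w f" by simp
  have sub: "insert g (Z - {f}) \<subseteq> E" using Z_sub g by blast
  obtain T where T: "T \<subseteq> insert g (Z - {f})" "spanning_tree V E T" using span_inside[OF sub c] by blast
  have fZ: "finite Z" using Z_sub E_fin finite_subset by blast
  have "sum w T \<le> sum w (insert g (Z - {f}))"
    using T(1) fZ by (intro sum_mono2) auto
  also have "\<dots> = w g + sum w (Z - {f})" using fZ g(2) by simp
  also have "\<dots> \<le> w f + sum w (Z - {f})" using le by simp
  also have "\<dots> = sum w Z" using fZ f by (simp add: sum.remove)
  finally have sT: "sum w T \<le> sum w Z" .
  have Zmin: "\<And>T'. spanning_tree V E T' \<Longrightarrow> sum w Z \<le> sum w T'"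
    using mst unfolding unique_MST_def MST_def by blast
  have "MST V E w T" unfolding MST_def
  proof (intro conjI allI impI)
    fix T' assume "spanning_tree V E T'"
    then show "sum w T \<le> sum w T'" using Zmin[of T'] sT by linarith
  qed (rule T(2))
  then have "T = Z" using mst unfolding unique_MST_def by blast
  then show False using T(1) f g(2) by auto
qed

lemma cross:
  assumes f: "f \<in> Z" "f = {p, q}" and g: "g \<in> E" "g \<notin> Z" "g = {a, b}"
    and pa: "reach (Z - {f}) p a" and qb: "reach (Z - {f}) q b"
  shows "w f < w g"
proof -
  obtain u v where uv: "u \<in> V" "v \<in> V" "u \<noteq> v" "f = {u, v}" using edge_form f(1) Z_sub by blast
  have pV: "p \<in> V" using uv f by auto
  define F' where "F' = insert g (Z - {f})"
  have sub: "Z - {f} \<subseteq> F'" unfolding F'_def by blast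
  have qp: "reach F' q p"
  proof -
    have 1: "reach F' q b" using reach_mono[OF qb sub] .
    have "{b, a} = g" using g(3) by auto
    then have "{b, a} \<in> F'" unfolding F'_def by simp
    then have 2: "reach F' b a" by (rule reach_edge)
    have 3: "reach F' a p" using reach_mono[OF reach_sym[OF pa] sub] .
    show ?thesis using reach_trans[OF reach_trans[OF 1 2] 3] .
  qed
  have all: "\<And>z. z \<in> V \<Longrightarrow> reach F' p z"
  proof -
    fix z assume "z \<in> V"
    then have "reach (Z - {f}) p z \<or> reach (Z - {f}) q z" using cut[OF f pV] by simp
    then show "reach F' p z"
    proof
      assume "reach (Z - {f}) p z" then show ?thesis using reach_mono[OF _ sub] by simp
    next
      assume "reach (Z - {f}) q z"
      then have "reach F' q z" using reach_mono[OF _ sub] by simp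
      then show ?thesis using reach_trans[OF reach_sym[OF qp]] by simp
    qed
  qed
  have "connected_on V F'" using all by (rule conn_from)
  then show ?thesis using exchange[OF f(1) g(1,2)] unfolding F'_def by simp
qed

lemma light:
  assumes g: "g \<in> E" "g \<notin> Z" "g = {x, y}"
  shows "reach {f \<in> Z. w f < w g} x y"
proof (rule ccontr)
  assume nr: "\<not> reach {f \<in> Z. w f < w g} x y"
  define R where "R = {f \<in> Z. w f < w g}"
  define C where "C = {z. reach R x z}"
  obtain u v where uv: "u \<in> V" "v \<in> V" "u \<noteq> v" "g = {u, v}" using edge_form g(1) by blast
  have xy: "x \<in> V" "y \<in> V" using uv g(3) by (auto simp: doubleton_eq_iff)
  obtain W where W: "walk Z W" "hd W = x" "last W = y" using Z_reach[OF xy] unfolding reach_def by blast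
  have "hd W \<in> C" "last W \<notin> C" using W nr unfolding C_def R_def by auto
  then obtain j where j: "Suc j < length W" "W ! j \<in> C" "W ! Suc j \<notin> C"
      "\<forall>i. j < i \<longrightarrow> i < length W \<longrightarrow> W ! i \<notin> C"
    using crossing_index[OF W(1)] by blast
  define f where "f = {W ! j, W ! Suc j}"
  have fZ: "f \<in> Z" unfolding f_def using walk_edge[OF W(1) j(1)] .
  have fR: "f \<notin> R"
  proof
    assume "f \<in> R"
    then have "reach R (W ! j) (W ! Suc j)" unfolding f_def by (rule reach_edge)
    then have "reach R x (W ! Suc j)" using j(2) unfolding C_def using reach_trans by simp
    then show False using j(3) unfolding C_def by simp
  qed
  have RZ: "R \<subseteq> Z - {f}" using fR unfolding R_def by blast
  have a: "reach (Z - {f}) (W ! j) x"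
    using j(2) unfolding C_def using reach_sym[OF reach_mono[OF _ RZ]] by simp
  have b: "reach (Z - {f}) (W ! Suc j) y"
  proof -
    have wd: "walk Z (drop (Suc j) W)" using walk_drop[OF W(1)] j(1) by simp
    have "walk (Z - {f}) (drop (Suc j) W)"
    proof (rule walk_restrict[OF wd], intro allI impI)
      fix i assume i: "Suc i < length (drop (Suc j) W)"
      have "{drop (Suc j) W ! i, drop (Suc j) W ! Suc i} \<in> Z" using walk_edge[OF wd i] .
      moreover have "drop (Suc j) W ! i \<notin> C" "drop (Suc j) W ! Suc i \<notin> C" using j(4) i by auto
      then have "{drop (Suc j) W ! i, drop (Suc j) W ! Suc i} \<noteq> f" using j(2) unfolding f_def
        by (auto simp: doubleton_eq_iff)
      ultimately show "{drop (Suc j) W ! i, drop (Suc j) W ! Suc i} \<in> Z - {f}" by simp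
    qed
    moreover have "hd (drop (Suc j) W) = W ! Suc j" using j(1) by (simp add: hd_drop_conv_nth)
    moreover have "last (drop (Suc j) W) = y" using j(1) W(3) by simp
    ultimately show ?thesis unfolding reach_def by blast
  qed
  have "w f < w g" using cross[OF fZ f_def g a b] .
  then show False using fR fZ unfolding R_def by simp
qed

lemma nopath:
  assumes f: "f \<in> Z" "f = {p, q}" and G: "G \<subseteq> E - {f}" "\<forall>g\<in>G. w g \<le> w f"
    and W: "walk G W" "hd W = p" "last W = q"
  shows False
proof -
  obtain u v where uv: "u \<in> V" "v \<in> V" "u \<noteq> v" "f = {u, v}" using edge_form f(1) Z_sub by blast
  have pV: "p \<in> V" using uv f by auto
  define C where "C = {z. reach (Z - {f}) p z}"
  have "hd W \<in> C" "last W \<notin> C" using W tree_sep[OF f pV] unfolding C_def by auto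
  then obtain j where j: "Suc j < length W" "W ! j \<in> C" "W ! Suc j \<notin> C"
    using crossing_index[OF W(1)] by blast
  define g where "g = {W ! j, W ! Suc j}"
  have gG: "g \<in> G" unfolding g_def using walk_edge[OF W(1) j(1)] .
  have gZ: "g \<notin> Z"
  proof
    assume "g \<in> Z"
    moreover have "g \<noteq> f" using gG G(1) by auto
    ultimately have "reach (Z - {f}) (W ! j) (W ! Suc j)" unfolding g_def by (intro reach_edge) auto
    then have "reach (Z - {f}) p (W ! Suc j)" using j(2) unfolding C_def using reach_trans by simp
    then show False using j(3) unfolding C_def by simp
  qed
  have a: "reach (Z - {f}) p (W ! j)" using j(2) unfolding C_def by simp
  have "g \<in> E" using gG G(1) by blast
  then obtain u' v' where "u' \<in> V" "v' \<in> V" "g = {u', v'}" using edge_form by blast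
  then have WV: "W ! Suc j \<in> V" unfolding g_def by (auto simp: doubleton_eq_iff)
  have b: "reach (Z - {f}) q (W ! Suc j)" using cut[OF f pV WV] j(3) unfolding C_def by simp
  have "w f < w g" using cross[OF f _ gZ g_def a b] gG G(1) by auto
  moreover have "w g \<le> w f" using G(2) gG by simp
  ultimately show False by simp
qed

end



lemma weight_take_le: "k < length xs \<Longrightarrow> walk_weight w (take (Suc k) xs) \<le> walk_weight w xs"
  using walk_weight_take_drop[of k xs w] by simp

lemma weight_drop_le: "k < length xs \<Longrightarrow> walk_weight w (drop k xs) \<le> walk_weight w xs"
  using walk_weight_take_drop[of k xs w] by simp

lemma short:
  assumes W: "walk F W" and occ: "Suc i < length W" "{W ! i, W ! Suc i} = f"
  shows "\<exists>A B. walk (F - {f}) A \<and> hd A = hd W \<and> last A \<in> f \<and> walk_weight w A \<le> walk_weight w W \<and>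
               walk (F - {f}) B \<and> last B = last W \<and> hd B \<in> f \<and> walk_weight w B \<le> walk_weight w W \<and>
               (last A = hd B \<longrightarrow> (\<exists>W'. walk (F - {f}) W' \<and> hd W' = hd W \<and> last W' = last W \<and>
                   length W' < length W \<and> walk_weight w W' \<le> walk_weight w W))"
proof -
  define S where "S = {i. Suc i < length W \<and> {W ! i, W ! Suc i} = f}"
  have fS: "finite S" unfolding S_def by (rule finite_subset[of _ "{..<length W}"]) auto
  have iS: "i \<in> S" unfolding S_def using occ by simp
  define j where "j = Min S"
  define j' where "j' = Max S"
  have jS: "j \<in> S" unfolding j_def using fS iS by (intro Min_in) auto
  have j'S: "j' \<in> S" unfolding j'_def using fS iS by (intro Max_in) auto
  have jmin: "\<And>k. k \<in> S \<Longrightarrow> j \<le> k" unfolding j_def using fS by simp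
  have jmax: "\<And>k. k \<in> S \<Longrightarrow> k \<le> j'" unfolding j'_def using fS by simp
  have jj: "j \<le> j'" using jmax[OF jS] .
  have j1: "Suc j < length W" "{W ! j, W ! Suc j} = f" using jS unfolding S_def by auto
  have j'1: "Suc j' < length W" "{W ! j', W ! Suc j'} = f" using j'S unfolding S_def by auto
  define A where "A = take (Suc j) W"
  define B where "B = drop (Suc j') W"
  have lenA: "length A = Suc j" unfolding A_def using j1 by simp
  have lenB: "length B = length W - Suc j'" unfolding B_def by simp
  have wA: "walk F A" unfolding A_def using walk_take[OF W] j1 by simp
  have wB: "walk F B" unfolding B_def using walk_drop[OF W] j'1 by simp
  have wA': "walk (F - {f}) A"
  proof (rule walk_restrict[OF wA], intro allI impI)
    fix k assume k: "Suc k < length A"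
    have e: "{A ! k, A ! Suc k} = {W ! k, W ! Suc k}" using k lenA unfolding A_def by simp
    have "k \<notin> S" using jmin[of k] k lenA by fastforce
    then have "{W ! k, W ! Suc k} \<noteq> f" unfolding S_def using k lenA j1 by simp
    then show "{A ! k, A ! Suc k} \<in> F - {f}" using walk_edge[OF wA k] e by simp
  qed
  have wB': "walk (F - {f}) B"
  proof (rule walk_restrict[OF wB], intro allI impI)
    fix k assume k: "Suc k < length B"
    have e: "{B ! k, B ! Suc k} = {W ! (Suc j' + k), W ! Suc (Suc j' + k)}" using k lenB unfolding B_def by simp
    have "Suc j' + k \<notin> S" using jmax[of "Suc j' + k"] by fastforce
    then have "{W ! (Suc j' + k), W ! Suc (Suc j' + k)} \<noteq> f" unfolding S_def using k lenB by simp
    then show "{B ! k, B ! Suc k} \<in> F - {f}" using walk_edge[OF wB k] e by simp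
  qed
  have hA: "hd A = hd W" unfolding A_def by simp
  have lA: "last A = W ! j" unfolding A_def using j1 by (simp add: take_Suc_conv_app_nth)
  have hB: "hd B = W ! Suc j'" unfolding B_def using j'1 by (simp add: hd_drop_conv_nth)
  have lB: "last B = last W" unfolding B_def using j'1 by simp
  have lAf: "last A \<in> f" using lA j1 by auto
  have hBf: "hd B \<in> f" using hB j'1 by auto
  have weA: "walk_weight w A \<le> walk_weight w W" unfolding A_def using weight_take_le[of j W w] j1 by simp
  have weB: "walk_weight w B \<le> walk_weight w W" unfolding B_def using weight_drop_le[of "Suc j'" W w] j'1 by simp
  have short: "\<exists>W'. walk (F - {f}) W' \<and> hd W' = hd W \<and> last W' = last W \<and>
                   length W' < length W \<and> walk_weight w W' \<le> walk_weight w W" if eq: "last A = hd B"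
  proof -
    have neA: "A \<noteq> []" "B \<noteq> []" using lenA lenB j'1 by auto
    have w1: "walk (F - {f}) (A @ tl B)" using walk_append[OF wA' wB' eq] .
    have h1: "hd (A @ tl B) = hd W" using neA hA by simp
    have l1: "last (A @ tl B) = last W" using last_append_tl[OF neA eq] lB by simp
    have len1: "length (A @ tl B) < length W" using length_append_tl[OF neA(2), of A] lenA lenB jj j'1 by simp
    have we1: "walk_weight w (A @ tl B) = walk_weight w A + walk_weight w B"
      using walk_append_weight[OF neA eq] .
    have tot: "walk_weight w W = walk_weight w A + walk_weight w (drop j W)"
      unfolding A_def using walk_weight_take_drop[of j W w] j1 by simp
    have dd: "drop (Suc j' - j) (drop j W) = B" unfolding B_def using jj by simp
    have "Suc j' - j < length (drop j W)" using j'1 jj by simp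
    then have "walk_weight w B \<le> walk_weight w (drop j W)" using weight_drop_le[of "Suc j' - j" "drop j W" w] dd by simp
    then have "walk_weight w (A @ tl B) \<le> walk_weight w W" using we1 tot by simp
    then show ?thesis using w1 h1 l1 len1 by blast
  qed
  show ?thesis
    apply (rule exI[of _ A], rule exI[of _ B])
    using wA' hA lAf weA wB' lB hBf weB short by simp
qed

context mst_setting
begin

lemma reduce1:
  assumes "R \<subseteq> Z" "walk Z W" "hd W = x" "last W = y" "reach R x y"
  shows "\<exists>W'. walk R W' \<and> hd W' = x \<and> last W' = y \<and> walk_weight w W' \<le> walk_weight w W"
  using assms
proof (induction "length W" arbitrary: W rule: less_induct)
  case less
  show ?case
  proof (cases "\<forall>i. Suc i < length W \<longrightarrow> {W ! i, W ! Suc i} \<in> R")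
    case True
    then have "walk R W" using walk_restrict[OF less.prems(2)] by simp
    then show ?thesis using less.prems by blast
  next
    case False
    then obtain i where i: "Suc i < length W" "{W ! i, W ! Suc i} \<notin> R" by blast
    define f where "f = {W ! i, W ! Suc i}"
    have fZ: "f \<in> Z" unfolding f_def using walk_edge[OF less.prems(2) i(1)] .
    have fR: "f \<notin> R" using i(2) unfolding f_def .
    obtain A B where AB: "walk (Z - {f}) A" "hd A = hd W" "last A \<in> f"
        "walk (Z - {f}) B" "last B = last W" "hd B \<in> f"
        "last A = hd B \<longrightarrow> (\<exists>W'. walk (Z - {f}) W' \<and> hd W' = hd W \<and> last W' = last W \<and>
                   length W' < length W \<and> walk_weight w W' \<le> walk_weight w W)"
      using short[OF less.prems(2) i(1) f_def[symmetric], of w] by blast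
    show ?thesis
    proof (cases "last A = hd B")
      case True
      then obtain W' where W': "walk (Z - {f}) W'" "hd W' = hd W" "last W' = last W"
          "length W' < length W" "walk_weight w W' \<le> walk_weight w W" using AB(7) by blast
      have "walk Z W'" using walk_mono[OF W'(1)] by blast
      then obtain W'' where "walk R W''" "hd W'' = x" "last W'' = y" "walk_weight w W'' \<le> walk_weight w W'"
        using less.hyps[OF W'(4) less.prems(1)] W'(2,3) less.prems(3-5) by blast
      then show ?thesis using W'(5) by (intro exI[of _ W'']) simp
    next
      case False
      have RZ: "R \<subseteq> Z - {f}" using less.prems(1) fR by blast
      have "reach (Z - {f}) x (last A)" using AB(1,2) less.prems(3) unfolding reach_def by blast
      then have 1: "reach (Z - {f}) (last A) x" by (rule reach_sym)
      have 2: "reach (Z - {f}) x y" using reach_mono[OF less.prems(5) RZ] .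
      have "reach (Z - {f}) (hd B) y" using AB(4,5) less.prems(4) unfolding reach_def by blast
      then have 3: "reach (Z - {f}) y (hd B)" by (rule reach_sym)
      have "reach (Z - {f}) (last A) (hd B)" using reach_trans[OF reach_trans[OF 1 2] 3] .
      then show ?thesis using tree_sep'[OF fZ AB(3) AB(6) False] by simp
    qed
  qed
qed

definition concl2 where
  "concl2 R x x' y' y c1 c2 \<longleftrightarrow>
    (\<exists>W. walk R W \<and> hd W = x \<and> last W = y \<and> walk_weight w W \<le> c1 + c2) \<or>
    (\<exists>A B. walk R A \<and> hd A = x \<and> last A = x' \<and> walk_weight w A \<le> c1 \<and>
           walk R B \<and> hd B = y' \<and> last B = y \<and> walk_weight w B \<le> c2)"

lemma concl2_mono:
  assumes "concl2 R x x' y' y c1 c2" "c1 \<le> d1" "c2 \<le> d2"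
  shows "concl2 R x x' y' y d1 d2"
proof -
  have s: "c1 + c2 \<le> d1 + d2" using assms(2,3) by simp
  from assms(1) consider
    (1) W where "walk R W" "hd W = x" "last W = y" "walk_weight w W \<le> c1 + c2"
  | (2) A B where "walk R A" "hd A = x" "last A = x'" "walk_weight w A \<le> c1"
           "walk R B" "hd B = y'" "last B = y" "walk_weight w B \<le> c2"
    unfolding concl2_def by blast
  then show ?thesis
  proof cases
    case 1
    then have "walk_weight w W \<le> d1 + d2" using s by linarith
    then show ?thesis unfolding concl2_def using 1 by blast
  next
    case 2
    then have "walk_weight w A \<le> d1" "walk_weight w B \<le> d2" using assms(2,3) by linarith+
    then show ?thesis unfolding concl2_def using 2 by blast
  qed
qed

lemma walk_rev_reach: "walk F A \<Longrightarrow> reach F (last A) (hd A)"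
proof -
  assume "walk F A"
  then have "reach F (hd A) (last A)" unfolding reach_def by blast
  then show ?thesis by (rule reach_sym)
qed

lemma walk_reach: "walk F A \<Longrightarrow> reach F (hd A) (last A)"
  unfolding reach_def by blast

lemma reduce2:
  assumes R: "R \<subseteq> Z" and rxy: "reach R x y" and rxy': "reach R x' y'"
  shows "walk Z W1 \<Longrightarrow> hd W1 = x \<Longrightarrow> last W1 = x' \<Longrightarrow> walk Z W2 \<Longrightarrow> hd W2 = y' \<Longrightarrow> last W2 = y \<Longrightarrow>
    concl2 R x x' y' y (walk_weight w W1) (walk_weight w W2)"
proof (induction "length W1 + length W2" arbitrary: W1 W2 rule: less_induct)
  case less
  note W1 = less.prems(1-3) and W2 = less.prems(4-6)
  have ryx: "reach R y x" using reach_sym[OF rxy] .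
  have ryx': "reach R y' x'" using reach_sym[OF rxy'] .
  consider (a) "\<exists>i. Suc i < length W1 \<and> {W1 ! i, W1 ! Suc i} \<notin> R"
    | (b) "\<forall>i. Suc i < length W1 \<longrightarrow> {W1 ! i, W1 ! Suc i} \<in> R"
          "\<exists>i. Suc i < length W2 \<and> {W2 ! i, W2 ! Suc i} \<notin> R"
    | (c) "\<forall>i. Suc i < length W1 \<longrightarrow> {W1 ! i, W1 ! Suc i} \<in> R"
          "\<forall>i. Suc i < length W2 \<longrightarrow> {W2 ! i, W2 ! Suc i} \<in> R"
    by blast
  then show ?case
  proof cases
    case c
    have "walk R W1" "walk R W2" using walk_restrict[OF W1(1)] walk_restrict[OF W2(1)] c by auto
    then show ?thesis unfolding concl2_def using W1 W2 by blast
  next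
    case a
    then obtain i where i: "Suc i < length W1" "{W1 ! i, W1 ! Suc i} \<notin> R" by blast
    define f where "f = {W1 ! i, W1 ! Suc i}"
    have fZ: "f \<in> Z" unfolding f_def using walk_edge[OF W1(1) i(1)] .
    have fR: "f \<notin> R" using i(2) unfolding f_def .
    have RZ: "R \<subseteq> Z - {f}" using R fR by blast
    obtain A1 B1 where AB: "walk (Z - {f}) A1" "hd A1 = hd W1" "last A1 \<in> f"
        "walk_weight w A1 \<le> walk_weight w W1"
        "walk (Z - {f}) B1" "last B1 = last W1" "hd B1 \<in> f"
        "last A1 = hd B1 \<longrightarrow> (\<exists>W'. walk (Z - {f}) W' \<and> hd W' = hd W1 \<and> last W' = last W1 \<and>
                   length W' < length W1 \<and> walk_weight w W' \<le> walk_weight w W1)"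
      using short[OF W1(1) i(1) f_def[symmetric], of w] by blast
    have rA1: "reach (Z - {f}) (last A1) x" using walk_rev_reach[OF AB(1)] AB(2) W1(2) by simp
    have rxyf: "reach (Z - {f}) x y" using reach_mono[OF rxy RZ] .
    show ?thesis
    proof (cases "\<exists>i'. Suc i' < length W2 \<and> {W2 ! i', W2 ! Suc i'} = f")
      case True
      then obtain i' where i': "Suc i' < length W2" "{W2 ! i', W2 ! Suc i'} = f" by blast
      obtain A2 B2 where AB2: "walk (Z - {f}) B2" "last B2 = last W2" "hd B2 \<in> f"
          "walk_weight w B2 \<le> walk_weight w W2"
        using short[OF W2(1) i', of w] by blast
      show ?thesis
      proof (cases "last A1 = hd B2")
        case True
        have ne: "A1 \<noteq> []" "B2 \<noteq> []" using AB(1) AB2(1) by auto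
        have wc: "walk Z (A1 @ tl B2)" using walk_mono[OF walk_append[OF AB(1) AB2(1) True]] by blast
        have hc: "hd (A1 @ tl B2) = x" using ne AB(2) W1(2) by simp
        have lc: "last (A1 @ tl B2) = y" using last_append_tl[OF ne True] AB2(2) W2(3) by simp
        have wec: "walk_weight w (A1 @ tl B2) \<le> walk_weight w W1 + walk_weight w W2"
          using walk_append_weight[OF ne True, of w] AB(4) AB2(4) by simp
        obtain W where Wc: "walk R W" "hd W = x" "last W = y" "walk_weight w W \<le> walk_weight w (A1 @ tl B2)"
          using reduce1[OF R wc hc lc rxy] by blast
        have "walk_weight w W \<le> walk_weight w W1 + walk_weight w W2" using Wc(4) wec by linarith
        then show ?thesis unfolding concl2_def using Wc(1-3) by blast
      next
        case False
        have "reach (Z - {f}) y (hd B2)" using walk_rev_reach[OF AB2(1)] AB2(2) W2(3) by simp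
        then have "reach (Z - {f}) (last A1) (hd B2)" using reach_trans[OF reach_trans[OF rA1 rxyf]] by simp
        then show ?thesis using tree_sep'[OF fZ AB(3) AB2(3) False] by simp
      qed
    next
      case False
      have wW2: "walk (Z - {f}) W2" using walk_restrict[OF W2(1)] walk_edge[OF W2(1)] False by auto
      show ?thesis
      proof (cases "last A1 = hd B1")
        case True
        then obtain W' where W': "walk (Z - {f}) W'" "hd W' = hd W1" "last W' = last W1"
          "length W' < length W1" "walk_weight w W' \<le> walk_weight w W1" using AB(8) by blast
        have "walk Z W'" using walk_mono[OF W'(1)] by blast
        then have "concl2 R x x' y' y (walk_weight w W') (walk_weight w W2)"
          using less.hyps[of W' W2] W'(2-4) W1 W2 by simp
        then show ?thesis using concl2_mono W'(5) by blast
      next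
        case False
        have 1: "reach (Z - {f}) y y'" using walk_rev_reach[OF wW2] W2(2,3) by simp
        have 2: "reach (Z - {f}) y' x'" using reach_mono[OF ryx' RZ] .
        have 3: "reach (Z - {f}) x' (hd B1)" using walk_rev_reach[OF AB(5)] AB(6) W1(3) by simp
        have "reach (Z - {f}) (last A1) (hd B1)"
          using reach_trans[OF reach_trans[OF reach_trans[OF reach_trans[OF rA1 rxyf] 1] 2] 3] .
        then show ?thesis using tree_sep'[OF fZ AB(3) AB(7) False] by simp
      qed
    qed
  next
    case b
    then obtain i where i: "Suc i < length W2" "{W2 ! i, W2 ! Suc i} \<notin> R" by blast
    define f where "f = {W2 ! i, W2 ! Suc i}"
    have fZ: "f \<in> Z" unfolding f_def using walk_edge[OF W2(1) i(1)] .
    have fR: "f \<notin> R" using i(2) unfolding f_def .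
    have RZ: "R \<subseteq> Z - {f}" using R fR by blast
    obtain A2 B2 where AB: "walk (Z - {f}) A2" "hd A2 = hd W2" "last A2 \<in> f"
        "walk_weight w A2 \<le> walk_weight w W2"
        "walk (Z - {f}) B2" "last B2 = last W2" "hd B2 \<in> f"
        "last A2 = hd B2 \<longrightarrow> (\<exists>W'. walk (Z - {f}) W' \<and> hd W' = hd W2 \<and> last W' = last W2 \<and>
                   length W' < length W2 \<and> walk_weight w W' \<le> walk_weight w W2)"
      using short[OF W2(1) i(1) f_def[symmetric], of w] by blast
    have wW1: "walk R W1" using walk_restrict[OF W1(1)] b(1) by auto
    show ?thesis
    proof (cases "last A2 = hd B2")
      case True
      then obtain W' where W': "walk (Z - {f}) W'" "hd W' = hd W2" "last W' = last W2"
        "length W' < length W2" "walk_weight w W' \<le> walk_weight w W2" using AB(8) by blast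
      have "walk Z W'" using walk_mono[OF W'(1)] by blast
      then have "concl2 R x x' y' y (walk_weight w W1) (walk_weight w W')"
        using less.hyps[of W1 W'] W'(2-4) W1 W2 by simp
      then show ?thesis using concl2_mono W'(5) by blast
    next
      case False
      have 1: "reach (Z - {f}) (last A2) y'" using walk_rev_reach[OF AB(1)] AB(2) W2(2) by simp
      have 2: "reach (Z - {f}) y' x'" using reach_mono[OF ryx' RZ] .
      have 3: "reach (Z - {f}) x' x" using walk_rev_reach[OF walk_mono[OF wW1 RZ]] W1(2,3) by simp
      have 4: "reach (Z - {f}) x y" using reach_mono[OF rxy RZ] .
      have 5: "reach (Z - {f}) y (hd B2)" using walk_rev_reach[OF AB(5)] AB(6) W2(3) by simp
      have "reach (Z - {f}) (last A2) (hd B2)"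
        using reach_trans[OF reach_trans[OF reach_trans[OF reach_trans[OF 1 2] 3] 4] 5] .
      then show ?thesis using tree_sep'[OF fZ AB(3) AB(7) False] by simp
    qed
  qed
qed

end



definition Hs :: "('v set \<Rightarrow> nat) \<Rightarrow> real \<Rightarrow> 'v set list \<Rightarrow> nat \<Rightarrow> 'v set set" where
  "Hs w t es m = foldl (greedy_step w t) {} (take m es)"

lemma Hs_Suc: "m < length es \<Longrightarrow> Hs w t es (Suc m) = greedy_step w t (Hs w t es m) (es ! m)"
  unfolding Hs_def by (simp add: take_Suc_conv_app_nth)

lemma Hs_ge: "length es \<le> m \<Longrightarrow> Hs w t es m = greedy_spanner w t es"
  unfolding Hs_def greedy_spanner_def by simp

lemma greedy_step_sub: "greedy_step w t H e \<subseteq> insert e H" "H \<subseteq> greedy_step w t H e"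
  unfolding greedy_step_def by auto

lemma Hs_sub: "Hs w t es m \<subseteq> set (take m es)"
proof (induction m)
  case 0 then show ?case by (simp add: Hs_def)
next
  case (Suc m)
  show ?case
  proof (cases "m < length es")
    case True
    have "set (take (Suc m) es) = insert (es ! m) (set (take m es))"
      using True by (simp add: take_Suc_conv_app_nth)
    then show ?thesis using Hs_Suc[OF True, of w t] greedy_step_sub(1)[of w t "Hs w t es m" "es ! m"] Suc.IH
      by blast
  next
    case False
    then show ?thesis using Hs_ge[of es m w t] Hs_ge[of es "Suc m" w t] Suc.IH by simp
  qed
qed

lemma Hs_mono_Suc: "Hs w t es m \<subseteq> Hs w t es (Suc m)"
proof (cases "m < length es")
  case True then show ?thesis using Hs_Suc[OF True, of w t] greedy_step_sub(2) by simp
next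
  case False then show ?thesis using Hs_ge[of es m w t] Hs_ge[of es "Suc m" w t] by simp
qed

lemma Hs_mono: "m \<le> m' \<Longrightarrow> Hs w t es m \<subseteq> Hs w t es m'"
proof (induction m' )
  case 0 then show ?case by simp
next
  case (Suc m')
  show ?case
  proof (cases "m = Suc m'")
    case False
    then have "m \<le> m'" using Suc.prems by simp
    then show ?thesis using Suc.IH Hs_mono_Suc[of w t es m'] by blast
  qed simp
qed

lemma added:
  assumes d: "distinct es" and m: "m < length es" and x: "es ! m \<in> greedy_spanner w t es"
  shows "es ! m \<in> Hs w t es (Suc m) \<and>
         (\<exists>u v. es ! m = {u, v} \<and> gdist w (Hs w t es m) u v > ereal (t * real (w (es ! m))))"
proof -
  define x where "x = es ! m"
  have notin: "x \<notin> Hs w t es m"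
  proof
    assume "x \<in> Hs w t es m"
    then have "x \<in> set (take m es)" using Hs_sub by blast
    then obtain i where i: "i < length (take m es)" "take m es ! i = x" by (metis in_set_conv_nth)
    then have "es ! i = es ! m" "i < m" "i < length es" using m unfolding x_def by auto
    then show False using d m nth_eq_iff_index_eq by fastforce
  qed
  show ?thesis
  proof (cases "\<exists>u v. x = {u, v} \<and> gdist w (Hs w t es m) u v > ereal (t * real (w x))")
    case True
    have "Hs w t es (Suc m) = greedy_step w t (Hs w t es m) x" using Hs_Suc[OF m, of w t] x_def by simp
    also have "\<dots> = insert x (Hs w t es m)" unfolding greedy_step_def by (rule if_P[OF True])
    finally have "Hs w t es (Suc m) = insert x (Hs w t es m)" .
    then show ?thesis using True unfolding x_def by simp
  next
    case False
    have "Hs w t es (Suc m) = greedy_step w t (Hs w t es m) x" using Hs_Suc[OF m, of w t] x_def by simp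
    also have "\<dots> = Hs w t es m" unfolding greedy_step_def by (rule if_not_P[OF False])
    finally have s: "Hs w t es (Suc m) = Hs w t es m" .
    have "\<forall>k. Suc m + k \<le> length es \<longrightarrow> x \<notin> Hs w t es (Suc m + k)"
    proof (intro allI)
      fix k show "Suc m + k \<le> length es \<longrightarrow> x \<notin> Hs w t es (Suc m + k)"
      proof (induction k)
        case 0 then show ?case using s notin by simp
      next
        case (Suc k)
        show ?case
        proof
          assume le: "Suc m + Suc k \<le> length es"
          then have lt: "Suc m + k < length es" by simp
          have ne: "es ! (Suc m + k) \<noteq> x" unfolding x_def using d lt m nth_eq_iff_index_eq by fastforce
          have "Hs w t es (Suc (Suc m + k)) \<subseteq> insert (es ! (Suc m + k)) (Hs w t es (Suc m + k))"
            using Hs_Suc[OF lt, of w t] greedy_step_sub(1) by simp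
          then show "x \<notin> Hs w t es (Suc m + Suc k)" using Suc.IH le ne by auto
        qed
      qed
    qed
    then have "x \<notin> Hs w t es (length es)" using m
      by (metis add_Suc_right le_add_diff_inverse less_eq_Suc_le order_refl plus_nat.simps(2))
    then show ?thesis using x Hs_ge[of es "length es" w t] unfolding x_def by simp
  qed
qed

lemma ell_Suc: "ell w Z vs (Suc m) = ell w Z vs m + real_of_ereal (gdist w Z (vs ! m) (vs ! Suc m))"
  unfolding ell_def by (simp add: sum.cl_ivl_Suc)

context mst_setting
begin

lemma ell_walk:
  assumes vs: "set vs \<subseteq> V" and m: "m + d < length vs"
  shows "\<exists>W. walk Z W \<and> hd W = vs ! m \<and> last W = vs ! (m + d) \<and>
            real (walk_weight w W) = ell w Z vs (m + d) - ell w Z vs m"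
  using m
proof (induction d)
  case 0
  then show ?case by (intro exI[of _ "[vs ! m]"]) simp
next
  case (Suc d)
  then obtain W where W: "walk Z W" "hd W = vs ! m" "last W = vs ! (m + d)"
      "real (walk_weight w W) = ell w Z vs (m + d) - ell w Z vs m" by auto
  have inV: "vs ! (m + d) \<in> V" "vs ! Suc (m + d) \<in> V" using vs Suc.prems by auto
  obtain W2 where W2: "walk Z W2" "hd W2 = vs ! (m + d)" "last W2 = vs ! Suc (m + d)"
      "gdist w Z (vs ! (m + d)) (vs ! Suc (m + d)) = ereal (real (walk_weight w W2))"
    using gdist_attained[OF Z_reach[OF inV], of w] by blast
  have e: "ell w Z vs (m + Suc d) = ell w Z vs (m + d) + real (walk_weight w W2)"
    using ell_Suc[of w Z vs "m + d"] W2(4) by simp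
  have ne: "W \<noteq> []" "W2 \<noteq> []" using W(1) W2(1) by auto
  have l: "last W = hd W2" using W(3) W2(2) by simp
  have "walk Z (W @ tl W2)" using walk_append[OF W(1) W2(1) l] .
  moreover have "hd (W @ tl W2) = vs ! m" using ne W(2) by simp
  moreover have "last (W @ tl W2) = vs ! (m + Suc d)" using last_append_tl[OF ne l] W2(3) by simp
  moreover have "real (walk_weight w (W @ tl W2)) = ell w Z vs (m + Suc d) - ell w Z vs m"
    using walk_append_weight[OF ne l, of w] W(4) e by simp
  ultimately show ?case by blast
qed

lemma ell_walk_abs:
  assumes vs: "set vs \<subseteq> V" and m: "m < length vs" "m' < length vs"
  shows "\<exists>W. walk Z W \<and> hd W = vs ! m \<and> last W = vs ! m' \<and>
            real (walk_weight w W) = \<bar>ell w Z vs m' - ell w Z vs m\<bar>"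
proof (cases "m \<le> m'")
  case True
  then obtain d where d: "m' = m + d" by (metis le_add_diff_inverse)
  obtain W where W: "walk Z W" "hd W = vs ! m" "last W = vs ! (m + d)"
            "real (walk_weight w W) = ell w Z vs (m + d) - ell w Z vs m"
    using ell_walk[OF vs, of m d] m d by blast
  have "ell w Z vs (m + d) - ell w Z vs m \<ge> 0" using W(4) by (metis of_nat_0_le_iff)
  then show ?thesis using W d by (intro exI[of _ W]) simp
next
  case False
  then obtain d where d: "m = m' + d" by (metis le_add_diff_inverse nat_le_linear)
  obtain W where W: "walk Z W" "hd W = vs ! m'" "last W = vs ! (m' + d)"
            "real (walk_weight w W) = ell w Z vs (m' + d) - ell w Z vs m'"
    using ell_walk[OF vs, of m' d] m d by blast
  have "ell w Z vs (m' + d) - ell w Z vs m' \<ge> 0" using W(4) by (metis of_nat_0_le_iff)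
  moreover have "walk Z (rev W)" "walk_weight w (rev W) = walk_weight w W" using walk_rev[OF W(1)] by auto
  moreover have "hd (rev W) = vs ! m" "last (rev W) = vs ! m'" using W(2,3) d by (auto simp: hd_rev last_rev)
  ultimately show ?thesis using W d by (intro exI[of _ "rev W"]) simp
qed

end



context mst_setting
begin

lemma greedy_sub: "greedy_spanner w t es \<subseteq> set es"
  using Hs_sub[of w t es "length es"] Hs_ge[of es "length es" w t] by simp

lemma light_in_H:
  assumes es: "distinct es" "set es = E" "sorted_wrt (\<lambda>e f. w e \<le> w f) es"
    and j: "j < length es" and eZ: "es ! j \<notin> Z"
    and f: "f \<in> Z" "w f < w (es ! j)"
  shows "f \<in> Hs w t es j"
proof -
  have "f \<in> set es" using f(1) Z_sub es(2) by blast
  then obtain mf where mf: "mf < length es" "es ! mf = f" by (metis in_set_conv_nth)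
  have mfj: "mf < j"
  proof (rule ccontr)
    assume "\<not> mf < j"
    then consider "mf = j" | "j < mf" by linarith
    then show False
    proof cases
      case 1 then show False using mf eZ f(1) by simp
    next
      case 2
      then have "w (es ! j) \<le> w (es ! mf)" using sorted_wrt_nth_less[OF es(3) 2 mf(1)] by simp
      then show False using mf f(2) by simp
    qed
  qed
  obtain p q where pq: "p \<in> V" "q \<in> V" "p \<noteq> q" "f = {p, q}" using edge_form f(1) Z_sub by blast
  have nr: "\<not> reach (Hs w t es mf) p q"
  proof
    assume "reach (Hs w t es mf) p q"
    then obtain W where W: "walk (Hs w t es mf) W" "hd W = p" "last W = q" unfolding reach_def by blast
    have G1: "Hs w t es mf \<subseteq> E - {f}"
    proof
      fix g assume "g \<in> Hs w t es mf"
      then have "g \<in> set (take mf es)" using Hs_sub by blast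
      then obtain i where i: "i < mf" "es ! i = g" using mf(1) by (auto simp: in_set_conv_nth)
      have "g \<noteq> f" using i mf es(1) nth_eq_iff_index_eq by fastforce
      moreover have "g \<in> E" using i mf(1) es(2) by auto
      ultimately show "g \<in> E - {f}" by simp
    qed
    have G2: "\<forall>g\<in>Hs w t es mf. w g \<le> w f"
    proof
      fix g assume "g \<in> Hs w t es mf"
      then have "g \<in> set (take mf es)" using Hs_sub by blast
      then obtain i where i: "i < mf" "es ! i = g" using mf(1) by (auto simp: in_set_conv_nth)
      then show "w g \<le> w f" using sorted_wrt_nth_less[OF es(3) i(1) mf(1)] mf(2) by simp
    qed
    show False using nopath[OF f(1) pq(4) G1 G2 W] .
  qed
  have inf: "gdist w (Hs w t es mf) p q = \<infinity>" using gdist_none[OF nr] .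
  have cond: "\<exists>u v. f = {u, v} \<and> gdist w (Hs w t es mf) u v > ereal (t * real (w f))"
    by (rule exI[of _ p], rule exI[of _ q]) (simp add: inf pq(4))
  have "Hs w t es (Suc mf) = greedy_step w t (Hs w t es mf) f" using Hs_Suc[OF mf(1), of w t] mf(2) by simp
  also have "\<dots> = insert f (Hs w t es mf)" unfolding greedy_step_def by (rule if_P[OF cond])
  finally have "f \<in> Hs w t es (Suc mf)" by simp
  then show ?thesis using Hs_mono[of "Suc mf" j w t es] mfj by auto
qed

lemma core:
  assumes es: "distinct es" "set es = E" "sorted_wrt (\<lambda>e f. w e \<le> w f) es"
    and t1: "1 + \<epsilon> \<le> t"
    and e: "e \<in> greedy_spanner w t es" "e \<notin> Z" and e': "e' \<in> greedy_spanner w t es" "e' \<notin> Z"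
    and idx: "j < length es" "j' < j" "es ! j = e" "es ! j' = e'"
    and uv: "e = {u, v}" "e' = {u', v'}"
    and W1: "walk Z W1" "hd W1 = u" "last W1 = u'" and W2: "walk Z W2" "hd W2 = v'" "last W2 = v"
    and small: "real (walk_weight w W1) + real (walk_weight w W2) < \<epsilon> * real (w e)"
  shows False
proof -
  define H where "H = Hs w t es j"
  obtain u0 v0 where uv0: "e = {u0, v0}" "gdist w H u0 v0 > ereal (t * real (w e))"
    using added[OF es(1) idx(1)] idx(3) e(1) unfolding H_def by blast
  have big: "gdist w H u v > ereal (t * real (w e))"
  proof -
    have "(u0 = u \<and> v0 = v) \<or> (u0 = v \<and> v0 = u)" using uv0(1) uv(1) by (auto simp: doubleton_eq_iff)
    then show ?thesis using uv0(2) gdist_sym[of w H u0 v0] by auto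
  qed
  have j'l: "j' < length es" using idx by simp
  have e'H: "e' \<in> H"
  proof -
    have "e' \<in> Hs w t es (Suc j')" using added[OF es(1) j'l] idx(4) e'(1) by simp
    then show ?thesis using Hs_mono[of "Suc j'" j w t es] idx(2) unfolding H_def by auto
  qed
  have ww: "w e' \<le> w e" using sorted_wrt_nth_less[OF es(3) idx(2) idx(1)] idx(3,4) by simp
  define R where "R = {f \<in> Z. w f < w e}"
  have RZ: "R \<subseteq> Z" unfolding R_def by blast
  have RH: "R \<subseteq> H"
  proof
    fix f assume "f \<in> R"
    then show "f \<in> H" unfolding H_def R_def using light_in_H[OF es idx(1), of f t] idx(3) e(2) by simp
  qed
  have eE: "e \<in> E" "e' \<in> E" using e(1) e'(1) greedy_sub es(2) by auto
  have ruv: "reach R u v" unfolding R_def using light[OF eE(1) e(2) uv(1)] .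
  have "reach {f \<in> Z. w f < w e'} u' v'" using light[OF eE(2) e'(2) uv(2)] .
  then have ruv': "reach R u' v'" using reach_mono[of _ u' v' R] ww unfolding R_def by fastforce
  have c2: "concl2 R u u' v' v (walk_weight w W1) (walk_weight w W2)"
    using reduce2[OF RZ ruv ruv' W1 W2] .
  have tw: "(1 + \<epsilon>) * real (w e) \<le> t * real (w e)" using t1 by (simp add: mult_right_mono)
  obtain P where P: "walk H P" "hd P = u" "last P = v" "real (walk_weight w P) < t * real (w e)"
  proof -
    from c2 consider
      (1) W where "walk R W" "hd W = u" "last W = v" "walk_weight w W \<le> walk_weight w W1 + walk_weight w W2"
    | (2) A B where "walk R A" "hd A = u" "last A = u'" "walk_weight w A \<le> walk_weight w W1"
           "walk R B" "hd B = v'" "last B = v" "walk_weight w B \<le> walk_weight w W2"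
      unfolding concl2_def by blast
    then show ?thesis
    proof cases
      case 1
      have "real (walk_weight w W) \<le> real (walk_weight w W1) + real (walk_weight w W2)" using 1(4) by simp
      also have "\<dots> < \<epsilon> * real (w e)" using small .
      also have "\<dots> \<le> (1 + \<epsilon>) * real (w e)" by (simp add: algebra_simps)
      finally have "real (walk_weight w W) < t * real (w e)" using tw by linarith
      then show ?thesis using that walk_mono[OF 1(1) RH] 1(2,3) by blast
    next
      case 2
      have wA: "walk H A" "walk H B" using walk_mono[OF 2(1) RH] walk_mono[OF 2(5) RH] by auto
      have wm: "walk H [u', v']" using e'H uv(2) by simp
      have l1: "last A = hd [u', v']" using 2(3) by simp
      have neA: "A \<noteq> []" "[u', v'] \<noteq> []" using 2(1) by auto
      define C where "C = A @ tl [u', v']"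
      have wC: "walk H C" unfolding C_def using walk_append[OF wA(1) wm l1] .
      have hC: "hd C = u" unfolding C_def using neA 2(2) by simp
      have lC: "last C = v'" unfolding C_def by simp
      have weC: "walk_weight w C = walk_weight w A + w e'"
        unfolding C_def using walk_append_weight[OF neA l1, of w] uv(2) by simp
      have l2: "last C = hd B" using lC 2(6) by simp
      have neC: "C \<noteq> []" "B \<noteq> []" using wC 2(5) by auto
      define D where "D = C @ tl B"
      have wD: "walk H D" unfolding D_def using walk_append[OF wC wA(2) l2] .
      have hD: "hd D = u" unfolding D_def using neC hC by simp
      have lD: "last D = v" unfolding D_def using last_append_tl[OF neC l2] 2(7) by simp
      have weD: "walk_weight w D = walk_weight w A + w e' + walk_weight w B"
        unfolding D_def using walk_append_weight[OF neC l2, of w] weC by simp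
      have "real (walk_weight w D) \<le> real (walk_weight w W1) + real (walk_weight w W2) + real (w e)"
        using weD 2(4,8) ww by simp
      also have "\<dots> < \<epsilon> * real (w e) + real (w e)" using small by simp
      also have "\<dots> = (1 + \<epsilon>) * real (w e)" by (simp add: algebra_simps)
      finally have "real (walk_weight w D) < t * real (w e)" using tw by linarith
      then show ?thesis using that wD hD lD by blast
    qed
  qed
  have "gdist w H u v \<le> ereal (real (walk_weight w P))" using gdist_le[OF P(1-3)] .
  also have "\<dots> < ereal (t * real (w e))" using P(4) by simp
  finally show False using big by simp
qed

lemma pair:
  assumes es: "distinct es" "set es = E" "sorted_wrt (\<lambda>e f. w e \<le> w f) es"
    and t1: "1 + \<epsilon> \<le> t" and vsV: "set vs \<subseteq> V"
    and e: "e \<in> greedy_spanner w t es" "e \<notin> Z" and e': "e' \<in> greedy_spanner w t es" "e' \<notin> Z"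
    and ne: "e \<noteq> e'" and uv: "e = {x, y}" "e' = {x', y'}"
    and m: "mx < length vs" "mx' < length vs" "my < length vs" "my' < length vs"
    and mv: "vs ! mx = x" "vs ! mx' = x'" "vs ! my = y" "vs ! my' = y'"
    and small: "\<bar>ell w Z vs mx' - ell w Z vs mx\<bar> + \<bar>ell w Z vs my - ell w Z vs my'\<bar> < \<epsilon> * real (max (w e) (w e'))"
  shows False
proof -
  have "e \<in> set es" "e' \<in> set es" using e(1) e'(1) greedy_sub by auto
  then obtain j j' where j: "j < length es" "es ! j = e" and j': "j' < length es" "es ! j' = e'"
    by (metis in_set_conv_nth)
  have "j \<noteq> j'" using j j' ne by auto
  then consider "j' < j" | "j < j'" by linarith
  then show False
  proof cases
    case 1
    have ww: "w e' \<le> w e" using sorted_wrt_nth_less[OF es(3) 1 j(1)] j(2) j'(2) by simp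
    obtain W1 where W1: "walk Z W1" "hd W1 = x" "last W1 = x'"
        "real (walk_weight w W1) = \<bar>ell w Z vs mx' - ell w Z vs mx\<bar>"
      using ell_walk_abs[OF vsV m(1) m(2)] mv by blast
    obtain W2 where W2: "walk Z W2" "hd W2 = y'" "last W2 = y"
        "real (walk_weight w W2) = \<bar>ell w Z vs my - ell w Z vs my'\<bar>"
      using ell_walk_abs[OF vsV m(4) m(3)] mv by blast
    have "real (walk_weight w W1) + real (walk_weight w W2) < \<epsilon> * real (w e)"
      using small W1(4) W2(4) ww by (simp add: max_def)
    then show False using core[OF es t1 e e' j(1) 1 j(2) j'(2) uv W1(1-3) W2(1-3)] by simp
  next
    case 2
    have ww: "w e \<le> w e'" using sorted_wrt_nth_less[OF es(3) 2 j'(1)] j(2) j'(2) by simp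
    obtain W1 where W1: "walk Z W1" "hd W1 = x'" "last W1 = x"
        "real (walk_weight w W1) = \<bar>ell w Z vs mx - ell w Z vs mx'\<bar>"
      using ell_walk_abs[OF vsV m(2) m(1)] mv by blast
    obtain W2 where W2: "walk Z W2" "hd W2 = y" "last W2 = y'"
        "real (walk_weight w W2) = \<bar>ell w Z vs my' - ell w Z vs my\<bar>"
      using ell_walk_abs[OF vsV m(3) m(4)] mv by blast
    have "real (walk_weight w W1) + real (walk_weight w W2) < \<epsilon> * real (w e')"
      using small W1(4) W2(4) ww by (simp add: max_def abs_minus_commute)
    then show False using core[OF es t1 e' e j'(1) 2 j'(2) j(2) uv(2) uv(1) W1(1-3) W2(1-3)] by simp
  qed
qed

end



lemma near:
  assumes vi: "vertex_in_interval w Z vs s x h" and h: "1 \<le> h"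
    and q: "q \<in> Nb s r b h"
    and r: "\<forall>j\<in>{1..s}. real (j - 1) * L / real s < real (r j) \<and> real (r j) < real j * L / real s"
    and L: "L = tour_length w Z vs" and c: "c = L / real s" and c0: "c \<ge> 0"
  shows "\<exists>m<length vs. vs ! m = x \<and> \<bar>ell w Z vs m - real q\<bar> < real b * c + c"
proof -
  obtain m where m: "m < length vs" "vs ! m = x"
      "real (h - 1) * L / real s \<le> ell w Z vs m" "ell w Z vs m \<le> real h * L / real s"
    using vi unfolding vertex_in_interval_def L by blast
  obtain h1 where h1: "q = r h1" "1 \<le> h1" "h1 \<le> s" "\<bar>int h - int h1\<bar> \<le> int b"
    using q unfolding Nb_def by blast
  have rh: "real (h1 - 1) * L / real s < real (r h1)" "real (r h1) < real h1 * L / real s"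
    using r h1(2,3) by auto
  have eq: "\<And>z. z * L / real s = z * c" unfolding c by simp
  have m1: "real h * c - c \<le> ell w Z vs m" "ell w Z vs m \<le> real h * c"
    using m(3,4) h unfolding eq by (simp_all add: of_nat_diff algebra_simps)
  have r1: "real h1 * c - c < real q" "real q < real h1 * c"
    using rh h1(1,2) unfolding eq by (simp_all add: of_nat_diff algebra_simps)
  have hb: "real h \<le> real h1 + real b" "real h1 \<le> real h + real b" using h1(4) by linarith+
  have p1: "real h * c \<le> real h1 * c + real b * c"
    using mult_right_mono[OF hb(1) c0] by (simp add: algebra_simps)
  have p2: "real h1 * c \<le> real h * c + real b * c"
    using mult_right_mono[OF hb(2) c0] by (simp add: algebra_simps)
  have "\<bar>ell w Z vs m - real q\<bar> < real b * c + c" using m1 r1 p1 p2 by linarith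
  then show ?thesis using m(1,2) by blast
qed

lemma arith_bound:
  fixes a c eps w1 w2 b1 b2 X1 X2 :: real
  assumes a: "a > 0" and eps: "eps > 0" and c: "c = eps * a / 8"
    and b1: "0 \<le> b1" "b1 \<le> w1 / a" and b2: "0 \<le> b2" "b2 \<le> w2 / a" and w: "a < w1" "a < w2"
    and X1: "X1 < (b1 * c + c) + (b2 * c + c)" and X2: "X2 < (b1 * c + c) + (b2 * c + c)"
  shows "X1 + X2 < eps * max w1 w2"
proof -
  have c0: "c \<ge> 0" unfolding c using a eps by simp
  have "b1 * c \<le> w1 / a * c" using mult_right_mono[OF b1(2) c0] .
  also have "\<dots> = eps * w1 / 8" using a c by (simp add: field_simps)
  finally have 1: "b1 * c \<le> eps * w1 / 8" .
  have "b2 * c \<le> w2 / a * c" using mult_right_mono[OF b2(2) c0] .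
  also have "\<dots> = eps * w2 / 8" using a c by (simp add: field_simps)
  finally have 2: "b2 * c \<le> eps * w2 / 8" .
  have m1: "eps * w1 \<le> eps * max w1 w2" "eps * w2 \<le> eps * max w1 w2" "eps * a < eps * max w1 w2"
    using eps w by (simp_all add: mult_left_mono)
  have "X1 + X2 < ((b1 * c + c) + (b2 * c + c)) + ((b1 * c + c) + (b2 * c + c))" using X1 X2 by linarith
  also have "\<dots> \<le> eps * w1 / 4 + eps * w2 / 4 + eps * a / 2" using 1 2 c by linarith
  also have "\<dots> < eps * max w1 w2" using m1 by linarith
  finally show ?thesis .
qed

theorem proposition2:
  fixes V :: "'v set" and E :: "'v set set" and w :: "'v set \<Rightarrow> nat" and Z :: "'v set set"
    and k :: nat and \<epsilon> :: real and es :: "'v set list" and vs :: "'v list"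
    and i :: nat and s :: nat and r :: "nat \<Rightarrow> nat"
    and src :: "'v set \<Rightarrow> 'v \<times> 'v" and hI jI :: "'v set \<Rightarrow> nat"
    and M :: "'v set \<Rightarrow> nat set set"
  assumes fin: "finite V" and simple: "simple_graph V E"
    and wpos: "\<forall>e\<in>E. w e > 0"
    and conn: "connected_on V E"
    and mst: "unique_MST V E w Z"
    and k2: "k \<ge> 2" and eps: "\<epsilon> > 0"
    and es: "distinct es" "set es = E" "sorted_wrt (\<lambda>e f. w e \<le> w f) es"
    and pre: "is_preorder V Z vs"
    and i: "1 \<le> i" "real i \<le> of_int \<lceil>log (real k) (real (card V))\<rceil>"
  defines "L \<equiv> tour_length w Z vs"
    and "a \<equiv> real k ^ (i - 1) * tour_length w Z vs / real (card V)"
    and "Ei \<equiv> {e \<in> greedy_spanner w ((2 * real k - 1) * (1 + \<epsilon>)) es - Z.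
                 real k ^ (i - 1) * tour_length w Z vs / real (card V) < real (w e) \<and>
                 real (w e) \<le> real k * (real k ^ (i - 1) * tour_length w Z vs / real (card V))}"
  assumes s: "real s = 8 * L / (\<epsilon> * a)" and Ls: "\<exists>m::nat. real m = L / real s"
    and r: "\<forall>j\<in>{1..s}. real (j - 1) * L / real s < real (r j) \<and> real (r j) < real j * L / real s"
    and K: "\<forall>e\<in>Ei. e = {fst (src e), snd (src e)} \<and> hI e \<in> {1..s} \<and> jI e \<in> {1..s}
              \<and> vertex_in_interval w Z vs s (fst (src e)) (hI e)
              \<and> vertex_in_interval w Z vs s (snd (src e)) (jI e)
              \<and> maximal_matching_between
                  (Nb s r (nat \<lfloor>real (w e) / a\<rfloor>) (hI e))
                  (Nb s r (nat \<lfloor>real (w e) / a\<rfloor>) (jI e)) (M e)"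
  shows "\<forall>e\<in>Ei. \<forall>e'\<in>Ei. e \<noteq> e' \<longrightarrow> M e \<inter> M e' = {}"
proof -
  interpret mst_setting V E w Z using fin simple mst by unfold_locales
  define t where "t = (2 * real k - 1) * (1 + \<epsilon>)"
  have t1: "1 + \<epsilon> \<le> t"
  proof -
    have "1 \<le> 2 * real k - 1" using k2 by simp
    then have "1 * (1 + \<epsilon>) \<le> (2 * real k - 1) * (1 + \<epsilon>)" using eps by (intro mult_right_mono) auto
    then show ?thesis unfolding t_def by simp
  qed
  have vsV: "set vs \<subseteq> V" using pre unfolding is_preorder_def by simp
  have EiD: "e \<in> greedy_spanner w t es \<and> e \<notin> Z \<and> a < real (w e) \<and> real (w e) \<le> real k * a" if "e \<in> Ei" for e
    using that unfolding Ei_def a_def t_def by simp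
  show ?thesis
  proof (intro ballI impI)
    fix e e' assume ee: "e \<in> Ei" "e' \<in> Ei" "e \<noteq> e'"
    show "M e \<inter> M e' = {}"
    proof (rule ccontr)
      assume "M e \<inter> M e' \<noteq> {}"
      then obtain X where X: "X \<in> M e" "X \<in> M e'" by blast
      have De: "e \<in> greedy_spanner w t es" "e \<notin> Z" "a < real (w e)" "real (w e) \<le> real k * a"
        using EiD[OF ee(1)] by auto
      have De': "e' \<in> greedy_spanner w t es" "e' \<notin> Z" "a < real (w e')" "real (w e') \<le> real k * a"
        using EiD[OF ee(2)] by auto
      have apos: "a > 0"
      proof (rule ccontr)
        assume "\<not> a > 0"
        then have "a \<le> 0" by simp
        then have "real k * a \<le> 1 * a" using k2 by (intro mult_right_mono_neg) auto
        then show False using De(3,4) by simp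
      qed
      have Lpos: "L > 0"
      proof (rule ccontr)
        assume "\<not> L > 0"
        then have "L \<le> 0" by simp
        then have "real k ^ (i - 1) * L \<le> 0" by (simp add: mult_nonneg_nonpos)
        then have "a \<le> 0" unfolding a_def L_def[symmetric] by (simp add: divide_nonpos_nonneg)
        then show False using apos by simp
      qed
      have spos: "real s > 0" using s Lpos apos eps by simp
      define c where "c = L / real s"
      have cval: "c = \<epsilon> * a / 8" unfolding c_def s using Lpos apos eps by (simp add: field_simps)
      have c0: "c \<ge> 0" unfolding cval using apos eps by simp
      define b where "b = nat \<lfloor>real (w e) / a\<rfloor>"
      define b' where "b' = nat \<lfloor>real (w e') / a\<rfloor>"
      have bb: "real b \<le> real (w e) / a" "real b' \<le> real (w e') / a"
        unfolding b_def b'_def using apos by simp_all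
      note Ke = K[rule_format, OF ee(1)] and Ke' = K[rule_format, OF ee(2)]
      have Me: "M e \<subseteq> {{q, q'} |q q'. q \<in> Nb s r b (hI e) \<and> q' \<in> Nb s r b (jI e) \<and> q \<noteq> q'}"
        using Ke unfolding maximal_matching_between_def b_def by blast
      have Me': "M e' \<subseteq> {{q, q'} |q q'. q \<in> Nb s r b' (hI e') \<and> q' \<in> Nb s r b' (jI e') \<and> q \<noteq> q'}"
        using Ke' unfolding maximal_matching_between_def b'_def by blast
      obtain q1 q2 where q12: "X = {q1, q2}" "q1 \<in> Nb s r b (hI e)" "q2 \<in> Nb s r b (jI e)"
        using Me X(1) by blast
      obtain q3 q4 where q34: "X = {q3, q4}" "q3 \<in> Nb s r b' (hI e')" "q4 \<in> Nb s r b' (jI e')"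
        using Me' X(2) by blast
      define x where "x = fst (src e)"
      define y where "y = snd (src e)"
      define x' where "x' = fst (src e')"
      define y' where "y' = snd (src e')"
      have exy: "e = {x, y}" "e' = {x', y'}" using Ke Ke' unfolding x_def y_def x'_def y'_def by auto
      have hj: "1 \<le> hI e" "1 \<le> jI e" "1 \<le> hI e'" "1 \<le> jI e'" using Ke Ke' by auto
      obtain mx where mx: "mx < length vs" "vs ! mx = x" "\<bar>ell w Z vs mx - real q1\<bar> < real b * c + c"
        using near[of w Z vs s x "hI e" q1 r b L c] Ke hj q12 r L_def c_def c0 unfolding x_def by blast
      obtain my where my: "my < length vs" "vs ! my = y" "\<bar>ell w Z vs my - real q2\<bar> < real b * c + c"
        using near[of w Z vs s y "jI e" q2 r b L c] Ke hj q12 r L_def c_def c0 unfolding y_def by blast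
      obtain mx' where mx': "mx' < length vs" "vs ! mx' = x'" "\<bar>ell w Z vs mx' - real q3\<bar> < real b' * c + c"
        using near[of w Z vs s x' "hI e'" q3 r b' L c] Ke' hj q34 r L_def c_def c0 unfolding x'_def by blast
      obtain my' where my': "my' < length vs" "vs ! my' = y'" "\<bar>ell w Z vs my' - real q4\<bar> < real b' * c + c"
        using near[of w Z vs s y' "jI e'" q4 r b' L c] Ke' hj q34 r L_def c_def c0 unfolding y'_def by blast
      have ab: "\<And>X1 X2. X1 < (real b * c + c) + (real b' * c + c) \<Longrightarrow> X2 < (real b * c + c) + (real b' * c + c) \<Longrightarrow>
                  X1 + X2 < \<epsilon> * real (max (w e) (w e'))"
      proof -
        fix X1 X2 :: real
        assume "X1 < (real b * c + c) + (real b' * c + c)" "X2 < (real b * c + c) + (real b' * c + c)"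
        then have "X1 + X2 < \<epsilon> * max (real (w e)) (real (w e'))"
          using arith_bound[OF apos eps cval _ bb(1) _ bb(2) De(3) De'(3)] by simp
        then show "X1 + X2 < \<epsilon> * real (max (w e) (w e'))" by (simp add: of_nat_max)
      qed
      have "(q3 = q1 \<and> q4 = q2) \<or> (q3 = q2 \<and> q4 = q1)" using q12(1) q34(1) by (auto simp: doubleton_eq_iff)
      then show False
      proof
        assume qq: "q3 = q1 \<and> q4 = q2"
        have "\<bar>ell w Z vs mx' - ell w Z vs mx\<bar> < (real b * c + c) + (real b' * c + c)"
          using mx(3) mx'(3) qq by linarith
        moreover have "\<bar>ell w Z vs my - ell w Z vs my'\<bar> < (real b * c + c) + (real b' * c + c)"
          using my(3) my'(3) qq by linarith
        ultimately have sm: "\<bar>ell w Z vs mx' - ell w Z vs mx\<bar> + \<bar>ell w Z vs my - ell w Z vs my'\<bar>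
            < \<epsilon> * real (max (w e) (w e'))" by (rule ab)
        show False using pair[OF es t1 vsV De(1,2) De'(1,2) ee(3) exy mx(1) mx'(1) my(1) my'(1)
            mx(2) mx'(2) my(2) my'(2) sm] .
      next
        assume qq: "q3 = q2 \<and> q4 = q1"
        have exy2: "e' = {y', x'}" using exy(2) by auto
        have "\<bar>ell w Z vs my' - ell w Z vs mx\<bar> < (real b * c + c) + (real b' * c + c)"
          using mx(3) my'(3) qq by linarith
        moreover have "\<bar>ell w Z vs my - ell w Z vs mx'\<bar> < (real b * c + c) + (real b' * c + c)"
          using my(3) mx'(3) qq by linarith
        ultimately have sm: "\<bar>ell w Z vs my' - ell w Z vs mx\<bar> + \<bar>ell w Z vs my - ell w Z vs mx'\<bar>
            < \<epsilon> * real (max (w e) (w e'))" by (rule ab)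
        show False using pair[OF es t1 vsV De(1,2) De'(1,2) ee(3) exy(1) exy2 mx(1) my'(1) my(1) mx'(1)
            mx(2) my'(2) my(2) mx'(2) sm] .
      qed
    qed
  qed
qed


end
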